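(* If $2^{a_1}3^{a_2}5^{a_3}\cdots=\prod_i p_i^{a_i}$ is a reduced integer, then $a_2\ge a_3\ge a_4\ge\cdots$.
   Context: Let $p_i$ denote the $i$-th prime ($p_1=2$). A positive integer $\prod_i p_i^{a_i}$ (with $a_i=0$ for all sufficiently large $i$) is called reduced if $\left\lfloor\frac{a_i+1}{a_j+2}\right\rfloor<\frac{\log p_j}{\log p_i}$ for all $i,j\ne 1$, and $2^{a_1}<8p_j^2$ for every $j$ with $a_j=0$. *)

theory Defs
  imports "HOL-Computational_Algebra.Primes" "HOL-Library.Infinite_Set" Complex_Main
begin

text \<open>The i-th prime, 1-indexed: pr 1 = 2, pr 2 = 3, pr 3 = 5, ...\<close>
definition pr :: "nat \<Rightarrow> nat" where
  "pr i = enumerate {p::nat. prime p} (i - 1)"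

definition ex :: "nat \<Rightarrow> nat \<Rightarrow> nat" where
  "ex n i = multiplicity (pr i) n"

definition reduced :: "nat \<Rightarrow> bool" where
  "reduced n \<longleftrightarrow> n > 0 \<and>
     (\<forall>i j. i \<ge> 2 \<and> j \<ge> 2 \<longrightarrow>
        real_of_int \<lfloor>real (ex n i + 1) / real (ex n j + 2)\<rfloor>
          < ln (real (pr j)) / ln (real (pr i))) \<and>
     (\<forall>j. j \<ge> 1 \<and> ex n j = 0 \<longrightarrow> (2::nat) ^ ex n 1 < 8 * pr j ^ 2)"

end

theory Submission
  imports Defs
begin

lemma pr_mono: "i < j \<Longrightarrow> i \<ge> 1 \<Longrightarrow> pr i < pr j"
  unfolding pr_def
  using strict_mono_enumerate[OF primes_infinite]
  by (simp add: strict_mono_def)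

lemma pr_prime: "prime (pr i)"
  unfolding pr_def using enumerate_in_set[OF primes_infinite] by simp

theorem lemma3p11:
  fixes n :: nat
  assumes "reduced n"
  shows "\<forall>i \<ge> 2. ex n (i + 1) \<le> ex n i"
proof (intro allI impI)
  fix i :: nat assume i: "i \<ge> 2"
  let ?b = "ex n (i+1)" and ?a = "ex n i"
  have f: "real_of_int \<lfloor>real (?b + 1) / real (?a + 2)\<rfloor> < ln (real (pr i)) / ln (real (pr (i+1)))"
    using assms i unfolding reduced_def by (metis (no_types, lifting) le_add1 order_trans)
  have p1: "2 \<le> pr i" using pr_prime prime_ge_2_nat by blast
  have p2: "pr i < pr (i+1)" using pr_mono i by simp
  have l1: "0 < ln (real (pr i))" using p1 by simp
  have l2: "ln (real (pr i)) < ln (real (pr (i+1)))" using p1 p2 by simp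
  have "ln (real (pr i)) / ln (real (pr (i+1))) < 1" using l1 l2 by simp
  with f have "\<lfloor>real (?b + 1) / real (?a + 2)\<rfloor> < 1" by linarith
  hence "\<lfloor>real (?b + 1) / real (?a + 2)\<rfloor> \<le> 0" by simp
  hence "real (?b + 1) / real (?a + 2) < 1" by (simp add: floor_le_iff)
  hence "real (?b + 1) < real (?a + 2)" by (simp add: divide_less_eq)
  thus "?b \<le> ?a" by simp
qed

end
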